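(* Let $U^{(r)}$ be uniformly distributed on the Stiefel manifold $V_r(\mathbb{R}^d)=\{U\in\mathbb{R}^{d\times r}:U^\top U=I_r\}$ and let $U\in V_r(\mathbb{R}^d)$ be deterministic. Then for any $\epsilon>0$, there exists $c>0$, depending only on $d$ and $r$, such that $$\mathbb{P}(\|U^{(r)}-U\|_{\mathrm{op}}\le\epsilon)\ge c\,(\epsilon\wedge\tfrac12)^{dr}.$$
   Context: $\|A\|_{\mathrm{op}}=\sup_{\|x\|_2=1}\|Ax\|_2$ is the operator norm. The uniform distribution on $V_r(\mathbb{R}^d)$ is the law of $Z(Z^\top Z)^{-1/2}$ for a $d\times r$ matrix $Z$ with independent $N(0,1)$ entries. *)

theory Defs
  imports "HOL-Analysis.Analysis" "HOL-Probability.Probability"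
begin

definition psd_sqrt :: "real^'n^'n \<Rightarrow> real^'n^'n" where
  "psd_sqrt A = (THE S. transpose S = S \<and> (\<forall>x. 0 \<le> x \<bullet> (S *v x)) \<and> S ** S = A)"

definition stiefel_map :: "real^'r^'d \<Rightarrow> real^'r^'d" where
  "stiefel_map Z = Z ** matrix_inv (psd_sqrt (transpose Z ** Z))"

definition gauss_mat :: "(real^'r^'d) measure" where
  "gauss_mat = density lborel
     (\<lambda>Z. ennreal (\<Prod>i\<in>UNIV. \<Prod>j\<in>UNIV. std_normal_density (Z $ i $ j)))"

definition stiefel :: "(real^'r^'d) set" where
  "stiefel = {U. transpose U ** U = mat 1}"

end

theory Submission
  imports Defs
begin


definition symm :: "real^'n^'n \<Rightarrow> bool" where "symm M \<longleftrightarrow> transpose M = M"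
definition psd :: "real^'n^'n \<Rightarrow> bool" where "psd M \<longleftrightarrow> (\<forall>x. 0 \<le> x \<bullet> (M *v x))"

lemma inner_mv_transpose: fixes A :: "real^'n^'m" shows "x \<bullet> (A *v y) = (transpose A *v x) \<bullet> y"
  using dot_lmul_matrix[of x A y] by simp

lemma symm_inner: "symm A \<Longrightarrow> x \<bullet> (A *v y) = (A *v x) \<bullet> y"
  by (metis inner_mv_transpose symm_def)

lemma quad_zero:
  fixes a b :: real
  assumes "\<And>t. 0 \<le> 2*t*a + t^2*b" shows "a = 0"
proof (rule ccontr)
  assume "a \<noteq> 0"
  have b: "0 \<le> b" using assms[of 1] assms[of "-1"] by simp
  define t where "t = - a / (b+1)"
  have "0 \<le> 2*t*a + t^2*b" by (rule assms)
  also have "2*t*a + t^2*b = a^2 * (-b-2) / (b+1)^2"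
    using b unfolding t_def by (simp add: power2_eq_square divide_simps) (simp add: algebra_simps)
  also have "\<dots> < 0" using b \<open>a \<noteq> 0\<close>
    by (intro divide_neg_pos mult_pos_neg) auto
  finally show False by simp
qed

lemma psd_null:
  assumes "symm P" "psd P" "y \<bullet> (P *v y) = 0"
  shows "P *v y = 0"
proof -
  let ?z = "P *v y"
  have "\<And>t. 0 \<le> 2*t*(?z \<bullet> (P *v y)) + t^2*(?z \<bullet> (P *v ?z))"
  proof -
    fix t :: real
    have "0 \<le> (y + t *\<^sub>R ?z) \<bullet> (P *v (y + t *\<^sub>R ?z))" using assms(2) psd_def by blast
    also have "\<dots> = y \<bullet> (P *v y) + t * (y \<bullet> (P *v ?z)) + t * (?z \<bullet> (P *v y)) + t^2 * (?z \<bullet> (P *v ?z))"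
      by (simp add: algebra_simps inner_add_left inner_add_right power2_eq_square)
    also have "y \<bullet> (P *v ?z) = ?z \<bullet> (P *v y)"
      using symm_inner[OF assms(1), of y ?z] by (simp add: inner_commute)
    finally show "0 \<le> 2*t*(?z \<bullet> (P *v y)) + t^2*(?z \<bullet> (P *v ?z))" using assms(3) by simp
  qed
  from quad_zero[OF this] show ?thesis by simp
qed

lemma ifmult1: "(if P then 1 else 0) * (y::real) = (if P then y else 0)" by simp
lemma ifmult2: "(y::real) * (if P then 1 else 0) = (if P then y else 0)" by simp

lemma trace_eq_inner: "trace M = (\<Sum>i\<in>UNIV. axis i 1 \<bullet> (M *v axis i (1::real)))"
  unfolding trace_def
  by (intro sum.cong refl) (simp add: inner_vec_def matrix_vector_mult_def axis_def ifmult1 ifmult2)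

lemma mm_add_r: "((A::real^'n^'m) + B) ** C = A ** C + B ** C"
  by (vector matrix_matrix_mult_def sum.distrib[symmetric] field_simps)
lemma mm_diff_r: "((A::real^'n^'m) - B) ** C = A ** C - B ** C"
  by (vector matrix_matrix_mult_def sum_subtractf[symmetric] field_simps)
lemma mm_diff_l: "(A::real^'n^'m) ** (B - C) = A ** B - A ** C"
  by (vector matrix_matrix_mult_def sum_subtractf[symmetric] field_simps)
lemma mm_neg_l: "(- (A::real^'n^'m)) ** B = - (A ** B)"
  by (vector matrix_matrix_mult_def sum_negf[symmetric] field_simps)
lemma mm_neg_r: "(A::real^'n^'m) ** (- B) = - (A ** B)"
  by (vector matrix_matrix_mult_def sum_negf[symmetric] field_simps)
lemma mv_neg: "(- (A::real^'n^'m)) *v x = - (A *v x)"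
  by (vector matrix_vector_mult_def sum_negf[symmetric])
lemma trace_neg: "trace (- (A::real^'n^'n)) = - trace A"
  by (simp add: trace_def sum_negf)

lemma mat_eq_cols: fixes M :: "real^'n^'m" assumes "\<And>i. M *v axis i 1 = 0" shows "M = 0"
proof -
  have "M $ i $ j = 0" for i j
  proof -
    have "(M *v axis j 1) $ i = M $ i $ j"
      by (simp add: matrix_vector_mult_def axis_def ifmult1 ifmult2)
    then show ?thesis using assms by simp
  qed
  then show ?thesis by (simp add: vec_eq_iff)
qed

lemma symm_add: "symm A \<Longrightarrow> symm B \<Longrightarrow> symm (A + B)"
  by (simp add: symm_def transpose_def vec_eq_iff)
lemma symm_diff: "symm A \<Longrightarrow> symm B \<Longrightarrow> symm (A - B)"
  by (simp add: symm_def transpose_def vec_eq_iff)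
lemma psd_add: "psd A \<Longrightarrow> psd B \<Longrightarrow> psd (A + B)"
  by (simp add: psd_def matrix_vector_mult_add_rdistrib inner_add_right add_nonneg_nonneg)

lemma psd_sqrt_unique:
  fixes S T :: "real^'n^'n"
  assumes sS: "symm S" and pS: "psd S" and sT: "symm T" and pT: "psd T" and eq: "S ** S = T ** T"
  shows "S = T"
proof -
  define D where "D = S - T"
  define P where "P = S + T"
  have sD: "symm D" using sS sT by (simp add: D_def symm_diff)
  have sP: "symm P" using sS sT by (simp add: P_def symm_add)
  have pP: "psd P" using pS pT by (simp add: P_def psd_add)
  have e1: "D ** P = S ** S - T ** S + (S ** T - T ** T)" unfolding D_def P_def by (simp only: mm_diff_r matrix_add_ldistrib)
  have e2: "P ** D = S ** S + T ** S - (S ** T + T ** T)" unfolding D_def P_def by (simp only: mm_add_r mm_diff_l)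
  have h1: "P ** D = - (D ** P)" unfolding e1 e2 eq by (simp add: algebra_simps)
  have "D ** P ** D = D ** (P ** D)" by (simp add: matrix_mul_assoc)
  also have "\<dots> = - (D ** (D ** P))" by (simp add: h1 mm_neg_r)
  finally have t1: "D ** P ** D = - (D ** (D ** P))" .
  have "trace (D ** (D ** P)) = trace ((D ** P) ** D)" by (rule trace_mul_sym)
  then have "trace (D ** P ** D) = - trace (D ** P ** D)" using t1 trace_neg by metis
  then have tr0: "trace (D ** P ** D) = 0" by simp
  have terms: "axis i 1 \<bullet> ((D ** P ** D) *v axis i 1) = (D *v axis i 1) \<bullet> (P *v (D *v axis i 1))" for i
    by (simp add: matrix_vector_mul_assoc[symmetric] symm_inner[OF sD])
  have nn: "0 \<le> (D *v axis i 1) \<bullet> (P *v (D *v axis i (1::real)))" for i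
    using pP psd_def by blast
  have "(\<Sum>i\<in>UNIV. (D *v axis i 1) \<bullet> (P *v (D *v axis i (1::real)))) = 0"
    using tr0 by (simp add: trace_eq_inner terms)
  then have "\<forall>i\<in>UNIV. (D *v axis i 1) \<bullet> (P *v (D *v axis i (1::real))) = 0"
    using nn by (subst sum_nonneg_eq_0_iff[symmetric]) auto
  then have "(P ** D) *v axis i 1 = 0" for i
    using psd_null[OF sP pP] by (simp add: matrix_vector_mul_assoc[symmetric])
  then have PD: "P ** D = 0" by (rule mat_eq_cols)
  then have "D ** P = 0" using h1 by (metis neg_equal_0_iff_equal)
  then have DST: "D ** S = - (D ** T)" unfolding P_def by (simp add: matrix_add_ldistrib eq_neg_iff_add_eq_0)
  have "D *v x = 0" for x
  proof -
    let ?y = "D *v x"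
    have a: "?y \<bullet> (S *v ?y) = x \<bullet> ((D ** S) *v ?y)"
      by (simp add: matrix_vector_mul_assoc[symmetric] symm_inner[OF sD])
    have b: "?y \<bullet> (T *v ?y) = x \<bullet> ((D ** T) *v ?y)"
      by (simp add: matrix_vector_mul_assoc[symmetric] symm_inner[OF sD])
    have c: "x \<bullet> ((D ** S) *v ?y) = - (x \<bullet> ((D ** T) *v ?y))"
      by (simp add: DST mv_neg)
    have yS: "0 \<le> ?y \<bullet> (S *v ?y)" "0 \<le> ?y \<bullet> (T *v ?y)" using pS pT psd_def by blast+
    then have "?y \<bullet> (S *v ?y) = 0" "?y \<bullet> (T *v ?y) = 0" using a b c by linarith+
    then have "S *v ?y = 0" "T *v ?y = 0" using psd_null sS pS sT pT by blast+
    then have "D *v ?y = 0" by (simp add: D_def matrix_vector_mult_diff_rdistrib)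
    then have "?y \<bullet> ?y = 0" using symm_inner[OF sD, of x ?y] by simp
    then show ?thesis by simp
  qed
  then have "D = 0" by (simp add: matrix_eq)
  then show ?thesis by (simp add: D_def)
qed




definition opb :: "real^'n^'m \<Rightarrow> real \<Rightarrow> bool" where
  "opb A c \<longleftrightarrow> (\<forall>x. norm (A *v x) \<le> c * norm x)"

lemma opb_add: "opb A a \<Longrightarrow> opb B b \<Longrightarrow> opb (A + B) (a + b)"
  unfolding opb_def
  by (metis (no_types, opaque_lifting) add_mono distrib_right matrix_vector_mult_add_rdistrib norm_triangle_le)

lemma opb_mm: "opb A a \<Longrightarrow> opb B b \<Longrightarrow> 0 \<le> a \<Longrightarrow> opb (A ** B) (a * b)"
  unfolding opb_def
  by (metis (no_types, opaque_lifting) matrix_vector_mul_assoc mult.assoc mult_left_mono order_trans)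

lemma mv_scaleR: "(c *\<^sub>R (A::real^'n^'m)) *v x = c *\<^sub>R (A *v x)"
  by (simp add: matrix_vector_mult_def vec_eq_iff sum_distrib_left mult.assoc)

lemma opb_scale: "opb A a \<Longrightarrow> opb (c *\<^sub>R A) (\<bar>c\<bar> * a)"
  unfolding opb_def by (simp add: mv_scaleR mult.assoc mult_left_mono)

lemma opb_onorm: "opb A (onorm ((*v) A))"
  unfolding opb_def using onorm[OF matrix_vector_mul_bounded_linear] by blast

lemma symm_transpose_mm: "symm X \<Longrightarrow> transpose (X ** X) = X ** X"
  by (simp add: symm_def matrix_transpose_mul)
lemma symm_scale: "symm A \<Longrightarrow> symm (c *\<^sub>R A)"
  by (simp add: symm_def transpose_scalar)
lemma symm_mat: "symm (mat c)" by (simp add: symm_def)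
lemma symm_0: "symm 0" by (simp add: symm_def transpose_def vec_eq_iff)

lemma norm_vec_sq: "norm (v::('a::real_normed_vector)^'n)^2 = (\<Sum>i\<in>UNIV. norm (v$i)^2)"
  by (simp add: norm_vec_def L2_set_def sum_nonneg)

lemma normsq: "norm (M::real^'n^'m)^2 = (\<Sum>i\<in>UNIV. \<Sum>j\<in>UNIV. (M$i$j)^2)"
  by (simp add: norm_vec_sq)

lemma normsq_cols: "norm (M::real^'n^'m)^2 = (\<Sum>j\<in>UNIV. norm (column j M)^2)"
proof -
  have "(\<Sum>j\<in>UNIV. norm (column j M)^2) = (\<Sum>j\<in>UNIV. \<Sum>i\<in>UNIV. (M$i$j)^2)"
    by (simp add: norm_vec_sq column_def)
  also have "\<dots> = (\<Sum>i\<in>UNIV. \<Sum>j\<in>UNIV. (M$i$j)^2)" by (rule sum.swap)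
  finally show ?thesis by (simp add: normsq)
qed

lemma norm_transpose: "norm (transpose (M::real^'n^'m)) = norm M"
proof -
  have "norm (transpose M)^2 = (\<Sum>i\<in>UNIV. \<Sum>j\<in>UNIV. (M$j$i)^2)"
    by (simp add: normsq transpose_def)
  also have "\<dots> = norm M^2" by (subst sum.swap) (simp add: normsq)
  finally have "norm (transpose M)^2 = norm M^2" .
  then show ?thesis by (simp add: power2_eq_iff_nonneg)
qed

lemma column_mm: "column j (A ** B) = A *v column j (B::real^'p^'n)"
  by (simp add: column_def matrix_vector_mult_def matrix_matrix_mult_def vec_eq_iff)

lemma norm_mm_le:
  fixes A :: "real^'n^'m" and B :: "real^'p^'n"
  assumes "opb A c" "0 \<le> c"
  shows "norm (A ** B) \<le> c * norm B"
proof -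
  have "norm (A ** B)^2 = (\<Sum>j\<in>UNIV. norm (column j (A ** B))^2)" by (rule normsq_cols)
  also have "\<dots> = (\<Sum>j\<in>UNIV. norm (A *v column j B)^2)" by (simp only: column_mm)
  also have "\<dots> \<le> (\<Sum>j\<in>UNIV. (c * norm (column j B))^2)"
  proof (rule sum_mono)
    fix j
    have "norm (A *v column j B) \<le> c * norm (column j B)" using assms(1) unfolding opb_def by blast
    then show "norm (A *v column j B)^2 \<le> (c * norm (column j B))^2"
      by (rule power_mono) simp
  qed
  also have "\<dots> = c^2 * (\<Sum>j\<in>UNIV. norm (column j B)^2)"
    by (simp add: power_mult_distrib sum_distrib_left)
  also have "\<dots> = (c * norm B)^2" by (metis normsq_cols power_mult_distrib)
  finally have "norm (A ** B)^2 \<le> (c * norm B)^2" .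
  then show ?thesis by (rule power2_le_imp_le) (simp add: assms(2))
qed

lemma norm_mm_le2:
  fixes A :: "real^'n^'m" and B :: "real^'p^'n"
  assumes "opb (transpose B) c" "0 \<le> c"
  shows "norm (A ** B) \<le> c * norm A"
  using norm_mm_le[OF assms, of "transpose A"]
  by (simp add: norm_transpose matrix_transpose_mul[symmetric])

lemma cont_mm[continuous_intros]:
  fixes f :: "'a::topological_space \<Rightarrow> real^'n^'m" and g :: "'a \<Rightarrow> real^'p^'n"
  assumes "continuous_on S f" "continuous_on S g" shows "continuous_on S (\<lambda>x. f x ** g x)"
  unfolding matrix_matrix_mult_def
  apply (rule continuous_on_vec_lambda)+
  apply (rule continuous_on_sum)
  apply (rule continuous_on_mult)
  apply (rule continuous_on_component)+
  apply (rule assms)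
  apply (rule continuous_on_component)+
  apply (rule assms)
  done

lemma cont_mv[continuous_intros]:
  fixes f :: "'a::topological_space \<Rightarrow> real^'n^'m" and g :: "'a \<Rightarrow> real^'n"
  assumes "continuous_on S f" "continuous_on S g" shows "continuous_on S (\<lambda>x. f x *v g x)"
  unfolding matrix_vector_mult_def
  apply (rule continuous_on_vec_lambda)+
  apply (rule continuous_on_sum)
  apply (rule continuous_on_mult)
  apply (rule continuous_on_component)+
  apply (rule assms)
  apply (rule continuous_on_component)+
  apply (rule assms)
  done

lemma cont_tr[continuous_intros]:
  fixes f :: "'a::topological_space \<Rightarrow> real^'n^'m"
  assumes "continuous_on S f" shows "continuous_on S (\<lambda>x. transpose (f x))"
  unfolding transpose_def
  apply (rule continuous_on_vec_lambda)+
  apply (rule continuous_on_component)+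
  apply (rule assms)
  done

lemma tendsto_mm[tendsto_intros]:
  fixes f :: "'a \<Rightarrow> real^'n^'m" and g :: "'a \<Rightarrow> real^'p^'n"
  assumes "(f \<longlongrightarrow> A) F" "(g \<longlongrightarrow> B) F" shows "((\<lambda>x. f x ** g x) \<longlongrightarrow> A ** B) F"
  unfolding matrix_matrix_mult_def
  apply (rule tendsto_vec_lambda)+
  apply (rule tendsto_sum)
  apply (rule tendsto_mult)
  apply (rule tendsto_vec_nth)+
  apply (rule assms)
  apply (rule tendsto_vec_nth)+
  apply (rule assms)
  done

lemma closed_symm: "closed {X::real^'n^'n. transpose X = X}"
  by (rule closed_Collect_eq[OF cont_tr[OF continuous_on_id] continuous_on_id])

lemma closed_symm_opb: "closed {X::real^'n^'n. symm X \<and> opb X r}"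
proof -
  have "{X::real^'n^'n. symm X \<and> opb X r} = {X. transpose X = X} \<inter> (\<Inter>x. {X. norm (X *v x) \<le> r * norm x})"
    by (auto simp: symm_def opb_def)
  moreover have "closed {X::real^'n^'n. norm (X *v x) \<le> r * norm x}" for x
    by (rule closed_Collect_le[OF continuous_on_norm[OF cont_mv[OF continuous_on_id continuous_on_const]] continuous_on_const])
  ultimately show ?thesis using closed_symm by (auto intro!: closed_Int closed_INT)
qed

lemma closed_symm_psd: "closed {X::real^'n^'n. symm X \<and> psd X}"
proof -
  have "{X::real^'n^'n. symm X \<and> psd X} = {X. transpose X = X} \<inter> (\<Inter>x. {X. 0 \<le> x \<bullet> (X *v x)})"
    by (auto simp: symm_def psd_def)
  moreover have "closed {X::real^'n^'n. 0 \<le> x \<bullet> (X *v x)}" for x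
    by (rule closed_Collect_le[OF continuous_on_const continuous_on_inner[OF continuous_on_const cont_mv[OF continuous_on_id continuous_on_const]]])
  ultimately show ?thesis using closed_symm by (auto intro!: closed_Int closed_INT)
qed




lemma transpose_diff: "transpose ((A::real^'n^'m) - B) = transpose A - transpose B"
  by (simp add: transpose_def vec_eq_iff)
lemma transpose_add: "transpose ((A::real^'n^'m) + B) = transpose A + transpose B"
  by (simp add: transpose_def vec_eq_iff)

lemma polar_opb:
  fixes M :: "real^'n^'n"
  assumes sM: "symm M" and q: "\<And>x. \<bar>x \<bullet> (M *v x)\<bar> \<le> m * (x \<bullet> x)" and m0: "0 \<le> m"
  shows "opb M m"
  unfolding opb_def
proof
  fix x :: "real^'n"
  show "norm (M *v x) \<le> m * norm x"
  proof (cases "M *v x = 0")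
    case True
    then show ?thesis using m0 by simp
  next
    case False
    define y where "y = (norm x / norm (M *v x)) *\<^sub>R (M *v x)"
    have nx: "norm x > 0" using False by auto
    have ny: "norm y = norm x" using False by (simp add: y_def)
    have xMy: "x \<bullet> (M *v y) = norm x * norm (M *v x)"
    proof -
      have "x \<bullet> (M *v y) = (norm x / norm (M *v x)) * (x \<bullet> (M *v (M *v x)))"
        by (simp add: y_def matrix_vector_mult_scaleR)
      also have "x \<bullet> (M *v (M *v x)) = (M *v x) \<bullet> (M *v x)" by (rule symm_inner[OF sM])
      also have "\<dots> = norm (M *v x)^2" by (simp add: power2_norm_eq_inner)
      finally show ?thesis using False by (simp add: power2_eq_square)
    qed
    have yMx: "y \<bullet> (M *v x) = x \<bullet> (M *v y)"
      using symm_inner[OF sM, of y x] by (simp add: inner_commute)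
    have pol: "4 * (x \<bullet> (M *v y)) = (x + y) \<bullet> (M *v (x + y)) - (x - y) \<bullet> (M *v (x - y))"
      using yMx by (simp add: matrix_vector_right_distrib matrix_vector_mult_diff_distrib inner_add_left inner_add_right inner_diff_left inner_diff_right)
    have "(x + y) \<bullet> (M *v (x + y)) \<le> m * ((x + y) \<bullet> (x + y))" using q[of "x+y"] by simp
    moreover have "- ((x - y) \<bullet> (M *v (x - y))) \<le> m * ((x - y) \<bullet> (x - y))" using q[of "x-y"] by simp
    ultimately have "4 * (x \<bullet> (M *v y)) \<le> m * ((x + y) \<bullet> (x + y) + (x - y) \<bullet> (x - y))"
      using pol by (simp add: distrib_left)
    also have "(x + y) \<bullet> (x + y) + (x - y) \<bullet> (x - y) = 2 * (x \<bullet> x) + 2 * (y \<bullet> y)"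
      by (simp add: inner_add_left inner_add_right inner_diff_left inner_diff_right inner_commute)
    also have "y \<bullet> y = x \<bullet> x" using ny by (metis power2_norm_eq_inner)
    finally have "4 * (norm x * norm (M *v x)) \<le> m * (4 * (x \<bullet> x))" using xMy by simp
    then have "norm x * norm (M *v x) \<le> norm x * (m * norm x)"
      by (simp add: power2_norm_eq_inner[symmetric] power2_eq_square mult_ac)
    then show ?thesis using nx by simp
  qed
qed

lemma sqrt_I_minus:
  fixes M :: "real^'n^'n"
  assumes sM: "symm M" and oM: "opb M m" and m0: "0 \<le> m" and m1: "m < 1"
  shows "\<exists>S. symm S \<and> psd S \<and> S ** S = mat 1 - M"
proof -
  define r where "r = 1 - sqrt (1 - m)"
  have sq: "sqrt (1 - m) ^ 2 = 1 - m" using m1 by simp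
  have r0: "0 \<le> r" using m0 m1 by (simp add: r_def)
  have r1: "r < 1" using m1 by (simp add: r_def)
  have rm: "m + r * r = 2 * r" using sq by (simp add: r_def algebra_simps power2_eq_square)
  define K where "K = {X::real^'n^'n. symm X \<and> opb X r}"
  define f where "f X = (1/2) *\<^sub>R (M + X ** X)" for X :: "real^'n^'n"
  have cK: "Topological_Spaces.complete K" unfolding K_def using closed_symm_opb complete_eq_closed by blast
  have K0: "0 \<in> K" unfolding K_def using r0 by (simp add: symm_0 opb_def)
  have fK: "f ` K \<subseteq> K"
  proof
    fix Y assume "Y \<in> f ` K"
    then obtain X where X: "X \<in> K" "Y = f X" by blast
    have sX: "symm X" and oX: "opb X r" using X unfolding K_def by auto
    have "symm (M + X ** X)" using sM sX by (intro symm_add) (simp_all add: symm_def matrix_transpose_mul)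
    then have "symm Y" unfolding X f_def by (rule symm_scale)
    moreover have "opb (M + X ** X) (m + r * r)" by (intro opb_add opb_mm oM oX r0)
    then have "opb Y (\<bar>1/2\<bar> * (m + r * r))" unfolding X f_def by (rule opb_scale)
    then have "opb Y r" using rm by simp
    ultimately show "Y \<in> K" by (simp add: K_def)
  qed
  have lip: "dist (f X) (f Y) \<le> r * dist X Y" if "X \<in> K" "Y \<in> K" for X Y
  proof -
    have sX: "symm X" and oX: "opb X r" and sY: "symm Y" and oY: "opb Y r" using that unfolding K_def by auto
    have e0: "X ** (X - Y) + (X - Y) ** Y = X ** X - Y ** Y"
      unfolding mm_diff_l mm_diff_r by simp
    have "f X - f Y = (1/2) *\<^sub>R (X ** X - Y ** Y)"
      unfolding f_def by (simp add: scaleR_diff_right scaleR_add_right)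
    then have eq: "f X - f Y = (1/2) *\<^sub>R (X ** (X - Y) + (X - Y) ** Y)" by (simp only: e0)
    have "norm (X ** (X - Y)) \<le> r * norm (X - Y)" by (rule norm_mm_le[OF oX r0])
    moreover have "norm ((X - Y) ** Y) \<le> r * norm (X - Y)"
      using sY oY by (intro norm_mm_le2 r0) (simp add: symm_def)
    ultimately have "norm (X ** (X - Y) + (X - Y) ** Y) \<le> 2 * r * norm (X - Y)"
      using norm_triangle_ineq[of "X ** (X - Y)" "(X - Y) ** Y"] by linarith
    then show ?thesis by (simp add: dist_norm eq)
  qed
  obtain X where XK: "X \<in> K" and fX: "f X = X"
    using Banach_fix[OF cK _ r0 r1 fK lip] K0 by blast
  have sX: "symm X" and oX: "opb X r" using XK unfolding K_def by auto
  have XX: "X ** X = 2 *\<^sub>R X - M"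
  proof -
    have "2 *\<^sub>R X = 2 *\<^sub>R f X" using fX by simp
    also have "\<dots> = M + X ** X" by (simp add: f_def)
    finally show ?thesis by simp
  qed
  define S where "S = mat 1 - X"
  have "S ** S = mat 1 - X - X + X ** X"
    by (simp add: S_def mm_diff_l mm_diff_r algebra_simps)
  also have "\<dots> = mat 1 - M" by (simp add: XX scaleR_2 algebra_simps)
  finally have SS: "S ** S = mat 1 - M" .
  have "symm S" using sX by (simp add: S_def symm_def transpose_diff)
  moreover have "psd S" unfolding psd_def
  proof
    fix x :: "real^'n"
    have "x \<bullet> (X *v x) \<le> norm x * norm (X *v x)" by (rule Cauchy_Schwarz_ineq2[THEN order_trans[OF abs_ge_self]])
    also have "\<dots> \<le> norm x * (r * norm x)" using oX unfolding opb_def by (simp add: mult_left_mono)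
    also have "\<dots> \<le> norm x * norm x"
      using mult_left_le_one_le[of "norm x" r] r0 r1 by (intro mult_left_mono) auto
    also have "\<dots> = x \<bullet> x" by (simp add: power2_norm_eq_inner[symmetric] power2_eq_square)
    finally show "0 \<le> x \<bullet> (S *v x)" by (simp add: S_def matrix_vector_mult_diff_rdistrib inner_diff_right)
  qed
  ultimately show ?thesis using SS by blast
qed




lemma psd_scale: "psd S \<Longrightarrow> 0 \<le> c \<Longrightarrow> psd (c *\<^sub>R S)"
  by (simp add: psd_def mv_scaleR)

lemma mm_scale_scale: "(c *\<^sub>R (A::real^'n^'n)) ** (d *\<^sub>R B) = (c * d) *\<^sub>R (A ** B)"
  by (simp add: matrix_matrix_mult_def vec_eq_iff sum_distrib_left mult_ac)

lemma psd_sqrt_exists_pd: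
  fixes A :: "real^'n^'n"
  assumes sA: "symm A" and pA: "psd A" and e: "0 < e"
  shows "\<exists>S. symm S \<and> psd S \<and> S ** S = A + e *\<^sub>R mat 1"
proof -
  define B where "B = A + e *\<^sub>R mat 1"
  define L where "L = onorm ((*v) A) + e"
  have oA: "opb A (onorm ((*v) A))" by (rule opb_onorm)
  have on0: "0 \<le> onorm ((*v) A)" by (rule onorm_pos_le[OF matrix_vector_mul_bounded_linear])
  have L0: "0 < L" using on0 e by (simp add: L_def)
  have Bx: "B *v x = A *v x + e *\<^sub>R x" for x
    by (simp add: B_def matrix_vector_mult_add_rdistrib mv_scaleR)
  define M where "M = mat 1 - (1/L) *\<^sub>R B"
  define m where "m = 1 - e / L"
  have m0: "0 \<le> m" using on0 e L0 by (simp add: m_def L_def field_simps)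
  have m1: "m < 1" using e L0 by (simp add: m_def)
  have sB: "symm B" unfolding B_def by (intro symm_add sA symm_scale symm_mat)
  have sM: "symm M" unfolding M_def by (intro symm_diff symm_mat symm_scale sB)
  have q: "\<bar>x \<bullet> (M *v x)\<bar> \<le> m * (x \<bullet> x)" for x
  proof -
    have xB: "x \<bullet> (B *v x) = x \<bullet> (A *v x) + e * (x \<bullet> x)" by (simp add: Bx inner_add_right)
    have lo: "e * (x \<bullet> x) \<le> x \<bullet> (B *v x)" using pA xB unfolding psd_def by auto
    have "x \<bullet> (A *v x) \<le> norm x * norm (A *v x)"
      by (rule Cauchy_Schwarz_ineq2[THEN order_trans[OF abs_ge_self]])
    also have "\<dots> \<le> norm x * (onorm ((*v) A) * norm x)"
      using oA unfolding opb_def by (simp add: mult_left_mono)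
    also have "\<dots> = onorm ((*v) A) * (x \<bullet> x)"
      by (simp add: power2_norm_eq_inner[symmetric] power2_eq_square)
    finally have hi: "x \<bullet> (B *v x) \<le> L * (x \<bullet> x)" using xB by (simp add: L_def distrib_right)
    have Mx: "x \<bullet> (M *v x) = x \<bullet> x - (x \<bullet> (B *v x)) / L"
      by (simp add: M_def matrix_vector_mult_diff_rdistrib mv_scaleR inner_diff_right)
    have xx: "0 \<le> x \<bullet> x" by simp
    have "(x \<bullet> (B *v x)) / L \<le> x \<bullet> x" using hi L0 by (simp add: divide_le_eq mult.commute)
    moreover have "e * (x \<bullet> x) / L \<le> (x \<bullet> (B *v x)) / L" using lo L0 by (simp add: divide_right_mono)
    ultimately show ?thesis using Mx xx
      by (simp add: m_def left_diff_distrib abs_le_iff)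
  qed
  have oM: "opb M m" by (rule polar_opb[OF sM q m0])
  obtain S0 where S0: "symm S0" "psd S0" "S0 ** S0 = mat 1 - M" using sqrt_I_minus[OF sM oM m0 m1] by blast
  define S where "S = sqrt L *\<^sub>R S0"
  have "S ** S = (sqrt L * sqrt L) *\<^sub>R (S0 ** S0)" by (simp add: S_def mm_scale_scale)
  also have "\<dots> = L *\<^sub>R ((1/L) *\<^sub>R B)" using L0 S0(3) by (simp add: M_def)
  also have "\<dots> = B" using L0 by simp
  finally have "S ** S = B" .
  moreover have "symm S" unfolding S_def by (rule symm_scale[OF S0(1)])
  moreover have "psd S" unfolding S_def using S0(2) L0 by (simp add: psd_scale)
  ultimately show ?thesis unfolding B_def by blast
qed

lemma normsq_trace: "symm (S::real^'n^'n) \<Longrightarrow> norm S ^ 2 = trace (S ** S)"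
  unfolding normsq trace_def matrix_matrix_mult_def symm_def
  by (metis (no_types, lifting) power2_eq_square sum.cong transpose_def vec_lambda_beta)

lemma trace_add_scale: "trace ((A::real^'n^'n) + e *\<^sub>R mat 1) = trace A + e * real CARD('n)"
  by (simp add: trace_def sum.distrib mat_def)

lemma psd_sqrt_exists:
  fixes A :: "real^'n^'n"
  assumes sA: "symm A" and pA: "psd A"
  shows "\<exists>S. symm S \<and> psd S \<and> S ** S = A"
proof -
  have "\<forall>n. \<exists>S. symm S \<and> psd S \<and> S ** S = A + (1 / real (Suc n)) *\<^sub>R mat 1"
    using psd_sqrt_exists_pd[OF sA pA] by simp
  then obtain S where S: "\<And>n. symm (S n) \<and> psd (S n) \<and> S n ** S n = A + (1 / real (Suc n)) *\<^sub>R mat 1"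
    by metis
  define R where "R = sqrt (\<bar>trace A\<bar> + real CARD('n))"
  have bnd: "norm (S n) \<le> R" for n
  proof -
    have "norm (S n) ^ 2 = trace A + (1 / real (Suc n)) * real CARD('n)"
      using S[of n] by (simp add: normsq_trace trace_add_scale)
    also have "\<dots> \<le> \<bar>trace A\<bar> + real CARD('n)"
      by (intro add_mono) (auto simp: field_simps)
    finally show ?thesis unfolding R_def by (simp add: real_le_rsqrt)
  qed
  define K where "K = cball (0::real^'n^'n) R \<inter> {X. symm X \<and> psd X}"
  have cK: "compact K" unfolding K_def by (intro compact_Int_closed compact_cball closed_symm_psd)
  have SK: "\<forall>n. S n \<in> K" using S bnd by (simp add: K_def)
  obtain l r where lK: "l \<in> K" and r: "strict_mono r" and lim: "(S \<circ> r) \<longlonglongrightarrow> l"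
    using seq_compactE[OF compact_imp_seq_compact[OF cK] SK] by blast
  have "(\<lambda>k. (S \<circ> r) k ** (S \<circ> r) k) \<longlonglongrightarrow> l ** l" by (intro tendsto_mm lim)
  moreover have "(\<lambda>k. (S \<circ> r) k ** (S \<circ> r) k) = (\<lambda>k. A + (1 / real (Suc (r k))) *\<^sub>R mat 1)"
    using S by auto
  moreover have "(\<lambda>k. A + (1 / real (Suc (r k))) *\<^sub>R mat 1) \<longlonglongrightarrow> A + 0 *\<^sub>R mat 1"
  proof (intro tendsto_intros)
    have "(\<lambda>n. 1 / real (Suc n)) \<longlonglongrightarrow> 0" by (rule LIMSEQ_Suc[OF lim_const_over_n]) 
    then show "(\<lambda>k. 1 / real (Suc (r k))) \<longlonglongrightarrow> 0"
      using LIMSEQ_subseq_LIMSEQ[OF _ r] unfolding comp_def by blast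
  qed
  ultimately have "l ** l = A" using LIMSEQ_unique by fastforce
  then show ?thesis using lK unfolding K_def by blast
qed

lemma psd_sqrt_props:
  fixes A :: "real^'n^'n"
  assumes "symm A" "psd A"
  shows "symm (psd_sqrt A) \<and> psd (psd_sqrt A) \<and> psd_sqrt A ** psd_sqrt A = A"
proof -
  let ?P = "\<lambda>S. transpose S = S \<and> (\<forall>x. 0 \<le> x \<bullet> (S *v x)) \<and> S ** S = A"
  have ex: "\<exists>!S. ?P S"
  proof -
    obtain S where "symm S" "psd S" "S ** S = A" using psd_sqrt_exists[OF assms] by blast
    then show ?thesis using psd_sqrt_unique unfolding symm_def psd_def by metis
  qed
  have "?P (psd_sqrt A)" unfolding psd_sqrt_def by (rule theI'[OF ex])
  then show ?thesis by (simp add: symm_def psd_def)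
qed




lemma minv_props:
  assumes "invertible (A::real^'n^'n)"
  shows "A ** matrix_inv A = mat 1 \<and> matrix_inv A ** A = mat 1"
  using assms unfolding invertible_def matrix_inv_def by (rule someI_ex)

lemma kernel_invertible:
  fixes A :: "real^'n^'n"
  assumes "\<And>x. A *v x = 0 \<Longrightarrow> x = 0"
  shows "invertible A"
proof -
  have "inj ((*v) A)"
  proof (rule injI)
    fix x y assume "A *v x = A *v y"
    then have "A *v (x - y) = 0" by (simp add: matrix_vector_mult_diff_distrib)
    then show "x = y" using assms[of "x - y"] by simp
  qed
  then show ?thesis using matrix_left_invertible_injective invertible_left_inverse by blast
qed

lemma opb_transpose:
  fixes A :: "real^'n^'m"
  assumes "opb A c" "0 \<le> c"
  shows "opb (transpose A) c"
  unfolding opb_def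
proof
  fix v :: "real^'m"
  let ?w = "transpose A *v v"
  have "norm ?w ^ 2 = v \<bullet> (A *v ?w)"
    by (simp add: power2_norm_eq_inner inner_mv_transpose)
  also have "\<dots> \<le> norm v * norm (A *v ?w)"
    by (rule Cauchy_Schwarz_ineq2[THEN order_trans[OF abs_ge_self]])
  also have "\<dots> \<le> norm v * (c * norm ?w)"
    using assms unfolding opb_def by (simp add: mult_left_mono)
  finally have "norm ?w * norm ?w \<le> norm ?w * (c * norm v)"
    by (simp add: power2_eq_square mult_ac)
  then show "norm ?w \<le> c * norm v"
    by (cases "norm ?w = 0") (auto simp: mult_le_cancel_left assms(2))
qed

lemma opb_mono: "opb A a \<Longrightarrow> a \<le> b \<Longrightarrow> opb A b"
  unfolding opb_def by (meson mult_right_mono norm_ge_zero order_trans)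

lemma stiefel_isometry:
  fixes U :: "real^'r^'d"
  assumes "transpose U ** U = mat 1"
  shows "norm (U *v x) = norm x"
proof -
  have "(U *v x) \<bullet> (U *v x) = (transpose U *v (U *v x)) \<bullet> x" by (rule inner_mv_transpose)
  also have "transpose U *v (U *v x) = x" by (simp only: matrix_vector_mul_assoc assms matrix_vector_mul_lid)
  finally have "norm (U *v x) ^ 2 = norm x ^ 2" by (simp add: power2_norm_eq_inner)
  then show ?thesis by (simp add: power2_eq_iff_nonneg)
qed

lemma gram_symm: "symm (transpose Z ** (Z::real^'r^'d))"
  by (simp add: symm_def matrix_transpose_mul)

lemma gram_psd: "psd (transpose Z ** (Z::real^'r^'d))"
  unfolding psd_def
proof
  fix x :: "real^'r"
  have "x \<bullet> ((transpose Z ** Z) *v x) = x \<bullet> (transpose Z *v (Z *v x))"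
    by (simp only: matrix_vector_mul_assoc)
  also have "\<dots> = (transpose (transpose Z) *v x) \<bullet> (Z *v x)" by (rule inner_mv_transpose)
  also have "\<dots> = (Z *v x) \<bullet> (Z *v x)" by (simp only: transpose_transpose)
  finally show "0 \<le> x \<bullet> ((transpose Z ** Z) *v x)" by simp
qed

lemma perturb:
  fixes U E :: "real^'r^'d"
  assumes U: "transpose U ** U = mat 1" and oE: "opb E \<delta>" and d0: "0 \<le> \<delta>" and d1: "\<delta> \<le> 1/16"
  shows "opb (stiefel_map (U + E) - U) (8 * \<delta>)"
proof -
  define Z where "Z = U + E"
  define G where "G = transpose Z ** Z"
  define P where "P = psd_sqrt G"
  have PP: "symm P" "psd P" "P ** P = G"
    using psd_sqrt_props[OF gram_symm gram_psd] unfolding P_def G_def by auto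
  have oU: "opb U 1" unfolding opb_def using stiefel_isometry[OF U] by simp
  have oUt: "opb (transpose U) 1" by (rule opb_transpose[OF oU]) simp
  have oEt: "opb (transpose E) \<delta>" by (rule opb_transpose[OF oE d0])
  have Geq: "G - mat 1 = transpose U ** E + transpose E ** U + transpose E ** E"
    unfolding G_def Z_def using U
    by (simp add: transpose_add matrix_add_ldistrib mm_add_r algebra_simps)
  have "opb (G - mat 1) (1 * \<delta> + \<delta> * 1 + \<delta> * \<delta>)"
    unfolding Geq by (intro opb_add opb_mm oUt oE oEt oU d0) simp
  then have oG: "opb (G - mat 1) (3 * \<delta>)"
    by (rule opb_mono) (use d0 d1 in \<open>auto intro: mult_left_le_one_le\<close>)
  have oP: "opb (P - mat 1) (3 * \<delta>)"
    unfolding opb_def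
  proof
    fix x :: "real^'r"
    define y where "y = (P - mat 1) *v x"
    have "(P + mat 1) ** (P - mat 1) = G - mat 1"
      by (simp add: mm_diff_l mm_add_r PP(3))
    then have Py: "(P + mat 1) *v y = (G - mat 1) *v x"
      by (simp add: y_def matrix_vector_mul_assoc)
    have "y \<bullet> y \<le> y \<bullet> ((P + mat 1) *v y)"
      using PP(2) unfolding psd_def by (simp add: matrix_vector_mult_add_rdistrib inner_add_right)
    also have "\<dots> \<le> norm y * norm ((P + mat 1) *v y)"
      by (rule Cauchy_Schwarz_ineq2[THEN order_trans[OF abs_ge_self]])
    also have "\<dots> \<le> norm y * (3 * \<delta> * norm x)"
      using oG unfolding opb_def Py by (simp add: mult_left_mono)
    finally have "norm y * norm y \<le> norm y * (3 * \<delta> * norm x)"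
      by (simp add: power2_norm_eq_inner[symmetric] power2_eq_square)
    then show "norm y \<le> 3 * \<delta> * norm x"
      by (cases "norm y = 0") (auto simp: mult_le_cancel_left d0)
  qed
  have Plow: "(1 - 3 * \<delta>) * norm y \<le> norm (P *v y)" for y
  proof -
    have "P *v y = y + (P - mat 1) *v y" by (simp add: matrix_vector_mult_diff_rdistrib)
    then have "norm y \<le> norm (P *v y) + norm ((P - mat 1) *v y)"
      by (metis add_diff_cancel_left' norm_triangle_ineq4 add.commute diff_add_cancel norm_minus_commute)
    moreover have "norm ((P - mat 1) *v y) \<le> 3 * \<delta> * norm y" using oP unfolding opb_def by blast
    ultimately show ?thesis by (simp add: algebra_simps)
  qed
  have invP: "invertible P"
  proof (rule kernel_invertible)
    fix y assume "P *v y = 0"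
    then have "(1 - 3 * \<delta>) * norm y \<le> 0" using Plow[of y] by simp
    moreover have "0 < 1 - 3 * \<delta>" using d1 by simp
    ultimately show "y = 0" by (simp add: mult_le_0_iff)
  qed
  define Pi where "Pi = matrix_inv P"
  have PPi: "P ** Pi = mat 1" "Pi ** P = mat 1" using minv_props[OF invP] unfolding Pi_def by auto
  have sm: "stiefel_map (U + E) = Z ** Pi" unfolding stiefel_map_def Z_def Pi_def P_def G_def Z_def ..
  show ?thesis
    unfolding opb_def
  proof
    fix x :: "real^'r"
    define y where "y = Pi *v x"
    have Py: "P *v y = x" by (simp add: y_def matrix_vector_mul_assoc PPi)
    have ny: "(1 - 3 * \<delta>) * norm y \<le> norm x" using Plow[of y] Py by simp
    have ea: "(stiefel_map (U + E) - U) *v x = Z *v y - U *v x"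
      by (simp only: sm matrix_vector_mult_diff_rdistrib matrix_vector_mul_assoc[symmetric] y_def)
    have eb: "U *v ((P - mat 1) *v y) = U *v x - U *v y"
      by (simp only: Py matrix_vector_mult_diff_rdistrib matrix_vector_mult_diff_distrib matrix_vector_mul_lid)
    have ec: "Z *v y = U *v y + E *v y" by (simp only: Z_def matrix_vector_mult_add_rdistrib)
    have "(stiefel_map (U + E) - U) *v x = E *v y - U *v ((P - mat 1) *v y)"
      unfolding ea eb ec by (simp add: algebra_simps)
    also have "norm \<dots> \<le> norm (E *v y) + norm (U *v ((P - mat 1) *v y))" by (rule norm_triangle_ineq4)
    also have "\<dots> \<le> \<delta> * norm y + 3 * \<delta> * norm y"
      using oE oP stiefel_isometry[OF U] unfolding opb_def by (intro add_mono) auto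
    also have "\<dots> = 4 * \<delta> * norm y" by simp
    also have "\<dots> \<le> 8 * \<delta> * norm x"
    proof -
      have "(1/2) * norm y \<le> (1 - 3 * \<delta>) * norm y" by (rule mult_right_mono) (use d1 in auto)
      then have "norm y \<le> 2 * norm x" using ny by linarith
      then have "4 * \<delta> * norm y \<le> 4 * \<delta> * (2 * norm x)" by (rule mult_left_mono) (use d0 in simp)
      then show ?thesis by simp
    qed
    finally show "norm ((stiefel_map (U + E) - U) *v x) \<le> 8 * \<delta> * norm x" .
  qed
qed




lemma opb_frob: "opb (A::real^'n^'m) (norm A)"
  unfolding opb_def
proof
  fix x :: "real^'n"
  have "norm (A *v x) ^ 2 = (\<Sum>i\<in>UNIV. ((A *v x) $ i)^2)" by (simp add: norm_vec_sq)
  also have "\<dots> \<le> (\<Sum>i\<in>UNIV. (norm (A $ i) * norm x)^2)"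
  proof (rule sum_mono)
    fix i
    have "\<bar>(A *v x) $ i\<bar> \<le> norm (A $ i) * norm x"
      by (simp add: matrix_vector_mul_component Cauchy_Schwarz_ineq2)
    then have "\<bar>(A *v x) $ i\<bar>^2 \<le> (norm (A $ i) * norm x)^2" by (rule power_mono) simp
    then show "((A *v x) $ i)^2 \<le> (norm (A $ i) * norm x)^2" by simp
  qed
  also have "\<dots> = (norm A * norm x)^2"
    by (simp add: power_mult_distrib sum_distrib_right norm_vec_sq[of A])
  finally show "norm (A *v x) \<le> norm A * norm x"
    by (rule power2_le_imp_le) simp
qed

lemma norm_mm_frob: "norm ((A::real^'n^'m) ** (B::real^'p^'n)) \<le> norm A * norm B"
  by (rule norm_mm_le[OF opb_frob norm_ge_zero])

lemma psd_sqrt_norm: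
  fixes A :: "real^'n^'n"
  assumes "symm A" "psd A"
  shows "norm (psd_sqrt A) \<le> sqrt (real CARD('n) * norm A)"
proof -
  have P: "symm (psd_sqrt A)" "psd_sqrt A ** psd_sqrt A = A" using psd_sqrt_props[OF assms] by auto
  have "norm (psd_sqrt A) ^ 2 = trace A" using normsq_trace[OF P(1)] P(2) by simp
  also have "\<dots> \<le> (\<Sum>i\<in>(UNIV::'n set). norm A)"
    unfolding trace_def
  proof (rule sum_mono)
    fix i :: 'n
    have "A $ i $ i \<le> norm (A $ i $ i)" by simp
    also have "\<dots> \<le> norm (A $ i)" by (rule Finite_Cartesian_Product.norm_nth_le)
    also have "\<dots> \<le> norm A" by (rule Finite_Cartesian_Product.norm_nth_le)
    finally show "A $ i $ i \<le> norm A" .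
  qed
  also have "\<dots> = real CARD('n) * norm A" by simp
  finally have "norm (psd_sqrt A)^2 \<le> real CARD('n) * norm A" .
  then show ?thesis by (rule real_le_rsqrt)
qed

lemma cont_psd_sqrt_R:
  "continuous_on (cball 0 R \<inter> {A::real^'n^'n. symm A \<and> psd A}) psd_sqrt"
proof -
  let ?S = "cball 0 R \<inter> {A::real^'n^'n. symm A \<and> psd A}"
  let ?T = "cball (0::real^'n^'n) (sqrt (real CARD('n) * R))"
  have fim: "psd_sqrt \<in> ?S \<rightarrow> ?T"
  proof
    fix A assume A: "A \<in> ?S"
    then have "norm (psd_sqrt A) \<le> sqrt (real CARD('n) * norm A)" by (intro psd_sqrt_norm) auto
    also have "\<dots> \<le> sqrt (real CARD('n) * R)" using A by (simp add: mult_left_mono)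
    finally show "psd_sqrt A \<in> ?T" by simp
  qed
  have geq: "(\<lambda>x. (x, psd_sqrt x)) ` ?S = (?S \<times> {B. symm B \<and> psd B}) \<inter> {p. snd p ** snd p = fst p}"
  proof (intro equalityI subsetI)
    fix p assume "p \<in> (\<lambda>x. (x, psd_sqrt x)) ` ?S"
    then obtain A where A: "A \<in> ?S" "p = (A, psd_sqrt A)" by blast
    then have "symm A" "psd A" by auto
    then have "symm (psd_sqrt A) \<and> psd (psd_sqrt A) \<and> psd_sqrt A ** psd_sqrt A = A" by (rule psd_sqrt_props)
    then show "p \<in> (?S \<times> {B. symm B \<and> psd B}) \<inter> {p. snd p ** snd p = fst p}" using A by simp
  next
    fix p assume p: "p \<in> (?S \<times> {B. symm B \<and> psd B}) \<inter> {p. snd p ** snd p = fst p}"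
    obtain A B where AB: "p = (A, B)" by (cases p)
    have A: "A \<in> ?S" and B: "symm B" "psd B" "B ** B = A" using p AB by auto
    then have "symm A" "psd A" by auto
    then have PA: "symm (psd_sqrt A) \<and> psd (psd_sqrt A) \<and> psd_sqrt A ** psd_sqrt A = A" by (rule psd_sqrt_props)
    have "B = psd_sqrt A" using B PA by (rule_tac psd_sqrt_unique) auto
    then show "p \<in> (\<lambda>x. (x, psd_sqrt x)) ` ?S" using A AB by auto
  qed
  have c1: "closed ?S" by (intro closed_Int closed_cball closed_symm_psd)
  have c2: "closed {p::(real^'n^'n) \<times> (real^'n^'n). snd p ** snd p = fst p}"
    by (rule closed_Collect_eq[OF cont_mm[OF continuous_on_snd[OF continuous_on_id] continuous_on_snd[OF continuous_on_id]] continuous_on_fst[OF continuous_on_id]])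
  have "closed ((?S \<times> {B. symm B \<and> psd B}) \<inter> {p. snd p ** snd p = fst p})"
    by (rule closed_Int[OF closed_Times[OF c1 closed_symm_psd] c2])
  then show ?thesis using continuous_from_closed_graph[OF compact_cball fim] geq by simp
qed

lemma cont_h: "continuous_on UNIV (\<lambda>Z::real^'r^'d. psd_sqrt (transpose Z ** Z))"
proof (rule continuous_at_imp_continuous_on, rule ballI)
  fix Z :: "real^'r^'d"
  let ?R = "norm Z + 1"
  have "continuous_on (ball 0 ?R) (\<lambda>Z::real^'r^'d. psd_sqrt (transpose Z ** Z))"
  proof (rule continuous_on_compose2[OF cont_psd_sqrt_R[of "?R * ?R"]])
    show "continuous_on (ball 0 ?R) (\<lambda>Z::real^'r^'d. transpose Z ** Z)"
      by (intro cont_mm cont_tr continuous_on_id)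
    show "(\<lambda>Z::real^'r^'d. transpose Z ** Z) ` ball 0 ?R \<subseteq> cball 0 (?R * ?R) \<inter> {A. symm A \<and> psd A}"
    proof safe
      fix W :: "real^'r^'d" assume W: "W \<in> ball 0 ?R"
      have "norm (transpose W ** W) \<le> norm (transpose W) * norm W" by (rule norm_mm_frob)
      also have "\<dots> \<le> ?R * ?R" using W by (simp add: norm_transpose mult_mono)
      finally show "transpose W ** W \<in> cball 0 (?R * ?R)" by simp
      show "symm (transpose W ** W)" by (rule gram_symm)
      show "psd (transpose W ** W)" by (rule gram_psd)
    qed
  qed
  then have "\<forall>W\<in>ball 0 ?R. isCont (\<lambda>Z::real^'r^'d. psd_sqrt (transpose Z ** Z)) W"
    using continuous_on_eq_continuous_at[OF open_ball] by blast
  moreover have "Z \<in> ball 0 ?R" by simp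
  ultimately show "isCont (\<lambda>Z::real^'r^'d. psd_sqrt (transpose Z ** Z)) Z" by blast
qed




definition SK :: "real \<Rightarrow> (real^'n^'n) set" where
  "SK K = {A. \<forall>x. norm x \<le> K * norm (A *v x)}"

lemma SK_invertible:
  assumes "A \<in> SK K" shows "invertible A"
proof (rule kernel_invertible)
  fix x assume x: "A *v x = 0"
  have "norm x \<le> K * norm (A *v x)" using assms unfolding SK_def by blast
  then show "x = 0" using x by simp
qed

lemma SK_inv_bound:
  assumes "A \<in> SK K" "0 \<le> K"
  shows "norm (matrix_inv (A::real^'n^'n)) \<le> sqrt (real CARD('n) * K^2)"
proof -
  let ?B = "matrix_inv A"
  have AB: "A ** ?B = mat 1" using minv_props[OF SK_invertible[OF assms(1)]] by simp
  have "norm (?B *v y) \<le> K * norm y" for y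
  proof -
    have "norm (?B *v y) \<le> K * norm (A *v (?B *v y))" using assms(1) unfolding SK_def by blast
    also have "A *v (?B *v y) = y" by (simp add: matrix_vector_mul_assoc AB)
    finally show ?thesis .
  qed
  moreover have "column j ?B = ?B *v axis j 1" for j
    by (simp add: column_def matrix_vector_mult_def axis_def vec_eq_iff ifmult2)
  ultimately have "norm (column j ?B) \<le> K" for j
  proof -
    assume h1: "\<And>y. norm (?B *v y) \<le> K * norm y" and h2: "\<And>j. column j ?B = ?B *v axis j 1"
    have "norm (?B *v axis j 1) \<le> K * norm (axis j (1::real))" by (rule h1)
    then show ?thesis by (simp add: h2)
  qed
  then have "norm (column j ?B)^2 \<le> K^2" for j by (simp add: power_mono)
  then have "norm ?B ^2 \<le> (\<Sum>j\<in>(UNIV::'n set). K^2)" unfolding normsq_cols[of ?B] by (intro sum_mono) auto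
  then show ?thesis by (simp add: real_le_rsqrt)
qed

lemma cont_minv_SK:
  fixes K :: real
  assumes "0 \<le> K"
  shows "continuous_on (SK K :: (real^'n^'n) set) matrix_inv"
proof -
  let ?T = "cball (0::real^'n^'n) (sqrt (real CARD('n) * K^2))"
  have fim: "matrix_inv \<in> SK K \<rightarrow> ?T" using SK_inv_bound[OF _ assms] by auto
  have geq: "(\<lambda>x. (x, matrix_inv x)) ` SK K = (SK K \<times> UNIV) \<inter> {p::(real^'n^'n) \<times> (real^'n^'n). fst p ** snd p = mat 1}"
  proof (intro equalityI subsetI)
    fix p :: "(real^'n^'n) \<times> (real^'n^'n)" assume "p \<in> (\<lambda>x. (x, matrix_inv x)) ` SK K"
    then obtain A where A: "A \<in> SK K" "p = (A, matrix_inv A)" by blast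
    then show "p \<in> (SK K \<times> UNIV) \<inter> {p::(real^'n^'n) \<times> (real^'n^'n). fst p ** snd p = mat 1}"
      using minv_props[OF SK_invertible[OF A(1)]] by simp
  next
    fix p :: "(real^'n^'n) \<times> (real^'n^'n)" assume p: "p \<in> (SK K \<times> UNIV) \<inter> {p::(real^'n^'n) \<times> (real^'n^'n). fst p ** snd p = mat 1}"
    obtain A B where AB: "p = (A, B)" by (cases p)
    have A: "A \<in> SK K" and B: "A ** B = mat 1" using p AB by auto
    have "matrix_inv A ** A = mat 1" using minv_props[OF SK_invertible[OF A]] by simp
    then have "matrix_inv A ** A ** B = B" by simp
    then have "B = matrix_inv A" using B by (simp add: matrix_mul_assoc[symmetric])
    then show "p \<in> (\<lambda>x. (x, matrix_inv x)) ` SK K" using A AB by auto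
  qed
  have cSK: "closed (SK K :: (real^'n^'n) set)"
  proof -
    have "SK K = (\<Inter>x. {A::real^'n^'n. norm x \<le> K * norm (A *v x)})" by (auto simp: SK_def)
    moreover have "closed {A::real^'n^'n. norm x \<le> K * norm (A *v x)}" for x
      by (rule closed_Collect_le[OF continuous_on_const continuous_on_mult[OF continuous_on_const continuous_on_norm[OF cont_mv[OF continuous_on_id continuous_on_const]]]])
    ultimately show ?thesis by auto
  qed
  have "closed ((SK K \<times> UNIV) \<inter> {p::(real^'n^'n) \<times> (real^'n^'n). fst p ** snd p = mat 1})"
    by (intro closed_Int closed_Times cSK closed_UNIV closed_Collect_eq[OF cont_mm[OF continuous_on_fst[OF continuous_on_id] continuous_on_snd[OF continuous_on_id]] continuous_on_const])
  then show ?thesis using continuous_from_closed_graph[OF compact_cball fim] geq by simp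
qed

lemma invertible_ball_SK:
  fixes A :: "real^'n^'n"
  assumes "invertible A"
  obtains K e where "0 < K" "0 < e" "ball A e \<subseteq> SK K"
proof -
  define K0 where "K0 = norm (matrix_inv A) + 1"
  have K0: "0 < K0" using norm_ge_zero[of "matrix_inv A"] unfolding K0_def by linarith
  have lowA: "norm x \<le> K0 * norm (A *v x)" for x
  proof -
    have "x = matrix_inv A *v (A *v x)" using minv_props[OF assms] by (simp add: matrix_vector_mul_assoc)
    moreover have "norm (matrix_inv A *v (A *v x)) \<le> norm (matrix_inv A) * norm (A *v x)"
      using opb_frob[of "matrix_inv A"] unfolding opb_def by blast
    ultimately have "norm x \<le> norm (matrix_inv A) * norm (A *v x)" by simp
    also have "\<dots> \<le> K0 * norm (A *v x)" by (simp add: K0_def mult_right_mono)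
    finally show ?thesis .
  qed
  have "ball A (1 / (2 * K0)) \<subseteq> SK (2 * K0)"
  proof
    fix B assume "B \<in> ball A (1 / (2 * K0))"
    then have nB: "norm (A - B) < 1 / (2 * K0)" by (simp add: dist_norm)
    show "B \<in> SK (2 * K0)" unfolding SK_def
    proof (intro CollectI allI)
      fix x
      have "A *v x = B *v x + (A - B) *v x" by (simp add: matrix_vector_mult_diff_rdistrib)
      then have t1: "norm (A *v x) \<le> norm (B *v x) + norm ((A - B) *v x)"
        using norm_triangle_ineq[of "B *v x" "(A - B) *v x"] by simp
      have t2: "norm ((A - B) *v x) \<le> norm (A - B) * norm x"
        using opb_frob[of "A - B"] unfolding opb_def by blast
      from t1 t2 have "norm (A *v x) \<le> norm (B *v x) + norm (A - B) * norm x" by linarith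
      then have "K0 * norm (A *v x) \<le> K0 * (norm (B *v x) + norm (A - B) * norm x)"
        by (rule mult_left_mono) (use K0 in simp)
      then have "norm x \<le> K0 * norm (B *v x) + K0 * (norm (A - B) * norm x)"
        using lowA[of x] by (simp add: distrib_left)
      moreover have "K0 * (norm (A - B) * norm x) \<le> norm x / 2"
      proof -
        have "K0 * norm (A - B) \<le> 1/2" using nB K0 by (simp add: field_simps)
        then have "(K0 * norm (A - B)) * norm x \<le> (1/2) * norm x" by (rule mult_right_mono) simp
        then show ?thesis by (simp add: mult.assoc)
      qed
      ultimately show "norm x \<le> 2 * K0 * norm (B *v x)" by linarith
    qed
  qed
  then show ?thesis using that[of "2 * K0" "1 / (2 * K0)"] K0 by simp
qed

lemma isCont_minv:
  fixes A :: "real^'n^'n"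
  assumes "invertible A"
  shows "isCont matrix_inv A"
proof -
  obtain K e where K: "0 < K" "0 < e" "ball A e \<subseteq> SK K" using invertible_ball_SK[OF assms] .
  then have "ball A e \<subseteq> interior (SK K)" using interior_maximal[OF K(3) open_ball] by blast
  then have "A \<in> interior (SK K)" using K(2) centre_in_ball by blast
  then show ?thesis using continuous_on_interior[OF cont_minv_SK[OF less_imp_le[OF K(1)]]] by blast
qed

lemma open_invertible: "open {A::real^'n^'n. invertible A}"
  unfolding open_contains_ball
proof
  fix A :: "real^'n^'n" assume "A \<in> {A. invertible A}"
  then obtain K e where K: "0 < K" "0 < e" "ball A e \<subseteq> SK K" using invertible_ball_SK by blast
  then show "\<exists>e>0. ball A e \<subseteq> {A. invertible A}" using SK_invertible by blast
qed




lemma isCont_mm: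
  fixes f :: "'a::t2_space \<Rightarrow> real^'n^'m" and g :: "'a \<Rightarrow> real^'p^'n"
  shows "isCont f x \<Longrightarrow> isCont g x \<Longrightarrow> isCont (\<lambda>x. f x ** g x) x"
  unfolding isCont_def by (rule tendsto_mm)

lemma stiefel_map_measurable: "(stiefel_map :: real^'r^'d \<Rightarrow> _) \<in> borel_measurable borel"
proof -
  define h where "h Z = psd_sqrt (transpose Z ** Z)" for Z :: "real^'r^'d"
  define G where "G = h -` {A. invertible A}"
  define K0 where "K0 = (SOME A'::real^'r^'r. False)"
  have ch: "isCont h Z" for Z
    using cont_h[where 'r='r and 'd='d] unfolding h_def continuous_on_eq_continuous_at[OF open_UNIV] by blast
  have oG: "open G" unfolding G_def by (rule continuous_open_vimage[OF open_invertible ch])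
  have eq: "stiefel_map = (\<lambda>Z. if Z \<in> G then Z ** matrix_inv (h Z) else Z ** K0)"
  proof
    fix Z :: "real^'r^'d"
    show "stiefel_map Z = (if Z \<in> G then Z ** matrix_inv (h Z) else Z ** K0)"
    proof (cases "Z \<in> G")
      case True then show ?thesis by (simp add: stiefel_map_def h_def)
    next
      case False
      then have "\<not> invertible (h Z)" by (simp add: G_def)
      then have "(\<lambda>A'. h Z ** A' = mat 1 \<and> A' ** h Z = mat 1) = (\<lambda>_. False)"
        unfolding invertible_def by blast
      then have "matrix_inv (h Z) = K0" unfolding matrix_inv_def K0_def by simp
      then show ?thesis using False by (simp add: stiefel_map_def h_def)
    qed
  qed
  have c1: "continuous_on G (\<lambda>Z. Z ** matrix_inv (h Z))"
  proof (rule continuous_at_imp_continuous_on, rule ballI)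
    fix Z assume "Z \<in> G"
    then have "invertible (h Z)" by (simp add: G_def)
    then show "isCont (\<lambda>Z. Z ** matrix_inv (h Z)) Z"
      by (intro isCont_mm continuous_ident isCont_o2[OF ch isCont_minv])
  qed
  have c2: "continuous_on (- G) (\<lambda>Z. Z ** K0)" by (intro cont_mm continuous_on_id continuous_on_const)
  show ?thesis unfolding eq using borel_measurable_continuous_on_if[OF borel_open[OF oG] c1 c2] .
qed

lemma onorm_lip:
  fixes M N U :: "real^'r^'d"
  shows "onorm (\<lambda>x. (M - U) *v x) \<le> onorm (\<lambda>x. (N - U) *v x) + norm (M - N)"
proof (rule onorm_le)
  fix x
  have "(M - U) *v x = (N - U) *v x + (M - N) *v x" by (simp add: matrix_vector_mult_diff_rdistrib)
  then have "norm ((M - U) *v x) \<le> norm ((N - U) *v x) + norm ((M - N) *v x)" by (metis norm_triangle_ineq)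
  also have "\<dots> \<le> onorm (\<lambda>x. (N - U) *v x) * norm x + norm (M - N) * norm x"
    using opb_onorm[of "N - U"] opb_frob[of "M - N"] unfolding opb_def by (intro add_mono) auto
  finally show "norm ((M - U) *v x) \<le> (onorm (\<lambda>x. (N - U) *v x) + norm (M - N)) * norm x"
    by (simp add: distrib_right)
qed

lemma cont_onorm: "continuous_on UNIV (\<lambda>M::real^'r^'d. onorm (\<lambda>x. (M - U) *v x))"
proof (rule lipschitz_on_continuous_on[where L=1], rule lipschitz_onI)
  fix M N :: "real^'r^'d"
  show "dist (onorm (\<lambda>x. (M - U) *v x)) (onorm (\<lambda>x. (N - U) *v x)) \<le> 1 * dist M N"
    using onorm_lip[of M U N] onorm_lip[of N U M] norm_minus_commute[of M N]
    by (simp add: dist_real_def dist_norm abs_le_iff)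
qed simp




lemma basis_eq: "(Basis :: (real^'r^'d) set) = (\<lambda>(i,j). axis i (axis j 1)) ` UNIV"
  by (auto simp: Basis_vec_def)

lemma basis_inj: "inj_on (\<lambda>(i,j). axis i (axis j (1::real)) :: real^'r^'d) UNIV"
  by (auto simp: inj_on_def axis_eq_axis)

lemma inner_basis: "(Z::real^'r^'d) \<bullet> axis i (axis j 1) = Z $ i $ j"
  by (simp add: inner_axis)

lemma prod_basis:
  fixes g :: "real \<Rightarrow> 'a::comm_monoid_mult"
  shows "(\<Prod>b\<in>(Basis::(real^'r^'d) set). g (Z \<bullet> b)) = (\<Prod>i\<in>UNIV. \<Prod>j\<in>UNIV. g (Z $ i $ j))"
proof -
  have "(\<Prod>b\<in>(Basis::(real^'r^'d) set). g (Z \<bullet> b)) = (\<Prod>p\<in>UNIV. g (Z \<bullet> (case p of (i,j) \<Rightarrow> axis i (axis j 1))))"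
    unfolding basis_eq by (subst prod.reindex[OF basis_inj]) (simp add: case_prod_beta)
  also have "\<dots> = (\<Prod>p\<in>UNIV. g (Z $ fst p $ snd p))"
    by (intro prod.cong refl) (auto simp: inner_basis split: prod.splits)
  also have "\<dots> = (\<Prod>i\<in>UNIV. \<Prod>j\<in>UNIV. g (Z $ i $ j))"
    by (subst prod.cartesian_product) (simp add: case_prod_beta UNIV_Times_UNIV[symmetric] del: UNIV_Times_UNIV)
  finally show ?thesis .
qed

lemma std_normal_eq: "std_normal_density = (\<lambda>x. (1 / sqrt (2 * pi)) * exp (- x\<^sup>2 / 2))"
  by (rule ext) (rule std_normal_density_def)

lemma cont_std_normal: "continuous_on UNIV std_normal_density"
  unfolding std_normal_eq by (intro continuous_intros) auto

definition gdens :: "real^'r^'d \<Rightarrow> real" where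
  "gdens Z = (\<Prod>i\<in>UNIV. \<Prod>j\<in>UNIV. std_normal_density (Z $ i $ j))"

lemma gdens_nonneg: "0 \<le> gdens Z"
  unfolding gdens_def by (intro prod_nonneg) auto

lemma gdens_cont: "continuous_on UNIV (gdens :: real^'r^'d \<Rightarrow> real)"
  unfolding gdens_def[abs_def]
  apply (rule continuous_on_prod)+
  apply (rule continuous_on_compose2[OF cont_std_normal])
  apply (rule continuous_on_component)+
  apply (rule continuous_on_id)
  apply simp
  done

lemma gdens_meas: "(\<lambda>Z. ennreal (gdens (Z::real^'r^'d))) \<in> borel_measurable borel"
  using borel_measurable_continuous_onI[OF gdens_cont] by measurable

lemma gdens_meas': "(\<lambda>Z. ennreal (gdens (Z::real^'r^'d))) \<in> borel_measurable lborel"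
  using gdens_meas by simp

lemma gauss_mat_eq: "gauss_mat = density lborel (\<lambda>Z. ennreal (gdens Z))"
  unfolding gauss_mat_def gdens_def ..

lemma sets_gauss: "sets (gauss_mat :: (real^'r^'d) measure) = sets borel"
  by (simp add: gauss_mat_def)

lemma space_gauss: "space (gauss_mat :: (real^'r^'d) measure) = UNIV"
  by (simp add: gauss_mat_def)

lemma std_normal_integral: "(\<integral>\<^sup>+x. ennreal (std_normal_density x) \<partial>lborel) = 1"
proof -
  interpret P: prob_space "density lborel (\<lambda>x. ennreal (std_normal_density x))"
    by (rule prob_space_normal_density) simp
  have "emeasure (density lborel (\<lambda>x. ennreal (std_normal_density x))) UNIV = 1"
    using P.emeasure_space_1 by simp
  moreover have "emeasure (density lborel (\<lambda>x. ennreal (std_normal_density x))) UNIV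
      = (\<integral>\<^sup>+x. ennreal (std_normal_density x) * indicator UNIV x \<partial>lborel)"
    by (rule emeasure_density) auto
  ultimately show ?thesis by simp
qed

lemma gauss_total: "emeasure (gauss_mat :: (real^'r^'d) measure) UNIV = 1"
proof -
  have "emeasure (gauss_mat :: (real^'r^'d) measure) UNIV = (\<integral>\<^sup>+Z. ennreal (gdens (Z::real^'r^'d)) \<partial>lborel)"
    unfolding gauss_mat_eq by (subst emeasure_density[OF gdens_meas']) auto
  also have "\<dots> = (\<integral>\<^sup>+Z. (\<Prod>b\<in>(Basis::(real^'r^'d) set). ennreal (std_normal_density (Z \<bullet> b))) \<partial>lborel)"
  proof (intro nn_integral_cong)
    fix Z :: "real^'r^'d"
    have "ennreal (gdens Z) = (\<Prod>i\<in>UNIV. \<Prod>j\<in>UNIV. ennreal (std_normal_density (Z $ i $ j)))"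
      unfolding gdens_def by (simp add: prod_ennreal prod_nonneg)
    then show "ennreal (gdens Z) = (\<Prod>b\<in>Basis. ennreal (std_normal_density (Z \<bullet> b)))"
      by (simp add: prod_basis[of "\<lambda>x. ennreal (std_normal_density x)"])
  qed
  also have "\<dots> = (\<Prod>b\<in>(Basis::(real^'r^'d) set). (\<integral>\<^sup>+x. ennreal (std_normal_density x) \<partial>lborel))"
    by (rule nn_integral_lborel_prod) auto
  also have "\<dots> = 1" by (simp add: std_normal_integral)
  finally show ?thesis .
qed

lemma gauss_prob: "prob_space (gauss_mat :: (real^'r^'d) measure)"
  by (rule prob_spaceI) (simp add: space_gauss gauss_total)




lemma phi_mono:
  assumes "\<bar>z\<bar> \<le> 2"
  shows "std_normal_density 2 \<le> std_normal_density z"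
proof -
  have "\<bar>z\<bar>^2 \<le> 2^2" using assms by (intro power_mono) auto
  then have "z^2 \<le> 4" by simp
  then have "exp (- (2\<^sup>2) / 2) \<le> exp (- z\<^sup>2 / 2)" by simp
  then show ?thesis unfolding std_normal_density_def by (intro mult_left_mono) auto
qed

theorem lemma16:
  shows "\<exists>c>0. \<forall>(U::real^'r^'d) \<in> stiefel. \<forall>\<epsilon>>0.
     measure gauss_mat {Z \<in> space gauss_mat. onorm (\<lambda>x. (stiefel_map Z - U) *v x) \<le> \<epsilon>}
       \<ge> c * (min \<epsilon> (1/2)) ^ (CARD('d) * CARD('r))"
proof -
  define n where "n = CARD('d) * CARD('r)"
  define N where "N = real CARD('d) * real CARD('r)"
  define p2 where "p2 = std_normal_density 2"
  define c where "c = (p2 / (8 * N)) ^ n"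
  have N1: "1 \<le> N"
  proof -
    have "1 * 1 \<le> real CARD('d) * real CARD('r)" by (rule mult_mono) auto
    then show ?thesis by (simp add: N_def)
  qed
  have N0: "0 < N" using N1 by simp
  have p20: "0 < p2" by (simp add: p2_def std_normal_density_def)
  have c0: "0 < c" using N0 p20 by (simp add: c_def)
  have main: "c * (min \<epsilon> (1/2)) ^ n \<le> measure gauss_mat {Z \<in> space gauss_mat. onorm (\<lambda>x. (stiefel_map Z - U) *v x) \<le> \<epsilon>}"
    if U: "U \<in> stiefel" and e: "0 < \<epsilon>" for U :: "real^'r^'d" and \<epsilon>
  proof -
    define E where "E = {Z \<in> space gauss_mat. onorm (\<lambda>x. (stiefel_map Z - U) *v x) \<le> \<epsilon>}"
    have UU: "transpose U ** U = mat 1" using U by (simp add: stiefel_def)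
    define m where "m = min \<epsilon> (1/2)"
    define \<delta> where "\<delta> = m / 16"
    define \<eta> where "\<eta> = \<delta> / N"
    have m0: "0 < m" using e by (simp add: m_def)
    have m1: "m \<le> \<epsilon>" "m \<le> 1/2" by (auto simp: m_def)
    have d0: "0 \<le> \<delta>" "\<delta> \<le> 1/16" using m0 m1 by (auto simp: \<delta>_def)
    have \<eta>0: "0 < \<eta>" using m0 N0 by (simp add: \<eta>_def \<delta>_def)
    have \<eta>d: "\<eta> \<le> \<delta>" unfolding \<eta>_def using N1 d0 by (simp add: divide_le_eq mult_le_cancel_left1 mult_left_mono[of 1 N \<delta>, simplified])
    have \<eta>1: "\<eta> \<le> 1" using \<eta>d d0 by simp
    have Nd: "N * \<eta> = \<delta>" using N0 by (simp add: \<eta>_def)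
    define C :: "real^'r^'d" where "C = (\<chi> i j. \<eta>)"
    define B where "B = cbox (U - C) (U + C)"
    have memB: "Z \<in> B \<longleftrightarrow> (\<forall>i j. \<bar>Z$i$j - U$i$j\<bar> \<le> \<eta>)" for Z
      unfolding B_def mem_box basis_eq by (auto simp: inner_basis C_def abs_le_iff algebra_simps)
    have onU: "onorm ((*v) U) \<le> 1"
      by (rule onorm_le) (simp add: stiefel_isometry[OF UU])
    have Ub: "\<bar>U$i$j\<bar> \<le> 1" for i j
      using matrix_component_le_onorm[of U i j] onU by simp
    have BE: "B \<subseteq> E"
    proof
      fix Z assume Z: "Z \<in> B"
      have "onorm ((*v) (Z - U)) \<le> real CARD('d) * real CARD('r) * \<eta>"
        by (rule onorm_le_matrix_component) (use memB Z in simp)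
      then have "opb (Z - U) \<delta>" using Nd opb_mono[OF opb_onorm] by (simp add: N_def)
      from perturb[OF UU this d0] have "opb (stiefel_map Z - U) (8 * \<delta>)" by simp
      then have "onorm (\<lambda>x. (stiefel_map Z - U) *v x) \<le> 8 * \<delta>"
        unfolding opb_def by (intro onorm_le) auto
      also have "8 * \<delta> \<le> \<epsilon>" using m1 m0 by (simp add: \<delta>_def)
      finally show "Z \<in> E" by (simp add: E_def space_gauss)
    qed
    have "(\<lambda>Z. onorm (\<lambda>x. (stiefel_map Z - U) *v x)) \<in> borel_measurable borel"
      by (rule borel_measurable_continuous_on[OF cont_onorm stiefel_map_measurable])
    moreover have "measurable (gauss_mat :: (real^'r^'d) measure) (borel :: real measure) = measurable borel borel"
      by (rule measurable_cong_sets[OF sets_gauss refl])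
    ultimately have "(\<lambda>Z. onorm (\<lambda>x. (stiefel_map Z - U) *v x)) \<in> borel_measurable gauss_mat" by simp
    then have Emeas: "E \<in> sets gauss_mat" unfolding E_def borel_measurable_iff_le by blast
    interpret prob_space "gauss_mat :: (real^'r^'d) measure" by (rule gauss_prob)
    have mono: "measure gauss_mat B \<le> measure gauss_mat E" by (rule finite_measure_mono[OF BE Emeas])
    have Bsets: "B \<in> sets lborel" unfolding B_def by simp
    have dens: "ennreal (p2 ^ n) * indicator B Z \<le> ennreal (gdens Z) * indicator B Z" for Z
    proof (cases "Z \<in> B")
      case True
      have "(\<Prod>i\<in>(UNIV::'d set). \<Prod>j\<in>(UNIV::'r set). p2) \<le> gdens Z"
        unfolding gdens_def
      proof (intro prod_mono conjI)
        fix i j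
        show "0 \<le> (\<Prod>j\<in>(UNIV::'r set). p2)" using p20 by (simp add: prod_nonneg)
        show "0 \<le> p2" using p20 by simp
        have zu: "\<bar>Z$i$j - U$i$j\<bar> \<le> \<eta>" using True memB by blast
        have "\<bar>Z$i$j\<bar> \<le> \<bar>U$i$j\<bar> + \<eta>"
          using abs_triangle_ineq[of "U$i$j" "Z$i$j - U$i$j"] zu by simp
        then have "\<bar>Z$i$j\<bar> \<le> 2" using Ub[of i j] \<eta>1 by simp
        then show "p2 \<le> std_normal_density (Z $ i $ j)" unfolding p2_def by (rule phi_mono)
      qed
      moreover have "(\<Prod>i\<in>(UNIV::'d set). \<Prod>j\<in>(UNIV::'r set). p2) = p2 ^ n"
        by (simp add: n_def power_mult[symmetric] mult.commute)
      ultimately have "p2 ^ n \<le> gdens Z" by simp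
      then show ?thesis using True by (simp add: ennreal_leI)
    qed simp
    have "emeasure lborel B = (\<Prod>b\<in>(Basis::(real^'r^'d) set). ((U + C) - (U - C)) \<bullet> b)"
      unfolding B_def by (rule emeasure_lborel_cbox) (auto simp: basis_eq inner_basis C_def \<eta>0 less_imp_le)
    also have "\<dots> = (\<Prod>i\<in>(UNIV::'d set). \<Prod>j\<in>(UNIV::'r set). ((U + C) - (U - C)) $ i $ j)"
      using prod_basis[of "\<lambda>x. x" "(U + C) - (U - C)"] by simp
    also have "\<dots> = (\<Prod>i\<in>(UNIV::'d set). \<Prod>j\<in>(UNIV::'r set). 2 * \<eta>)"
      by (intro arg_cong[where f=ennreal] prod.cong refl) (simp add: C_def)
    also have "\<dots> = ((2 * \<eta>) ^ CARD('r)) ^ CARD('d)" by (simp only: prod_constant)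
    also have "\<dots> = (2 * \<eta>) ^ n" unfolding n_def power_mult[symmetric] by (simp only: mult.commute)
    finally have lB: "emeasure lborel B = ennreal ((2 * \<eta>) ^ n)" .
    have "ennreal (p2 ^ n * (2 * \<eta>) ^ n) = ennreal (p2 ^ n) * emeasure lborel B"
      using p20 \<eta>0 by (simp add: lB ennreal_mult)
    also have "\<dots> = (\<integral>\<^sup>+Z. ennreal (p2 ^ n) * indicator B Z \<partial>lborel)"
      by (rule nn_integral_cmult_indicator[OF Bsets, symmetric])
    also have "\<dots> \<le> (\<integral>\<^sup>+Z. ennreal (gdens Z) * indicator B Z \<partial>lborel)"
      by (rule nn_integral_mono) (rule dens)
    also have "\<dots> = emeasure gauss_mat B"
      unfolding gauss_mat_eq by (rule emeasure_density[OF gdens_meas' Bsets, symmetric])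
    finally have eB: "ennreal (p2 ^ n * (2 * \<eta>) ^ n) \<le> emeasure gauss_mat B" .
    have "p2 ^ n * (2 * \<eta>) ^ n \<le> measure gauss_mat B"
    proof -
      have fin: "emeasure gauss_mat B < top" using emeasure_finite[of B] by (simp add: less_top[symmetric])
      have "enn2real (ennreal (p2 ^ n * (2 * \<eta>) ^ n)) \<le> enn2real (emeasure gauss_mat B)"
        by (rule enn2real_mono[OF eB fin])
      then show ?thesis unfolding measure_def using p20 \<eta>0 by simp
    qed
    also note mono
    finally have "p2 ^ n * (2 * \<eta>) ^ n \<le> measure gauss_mat E" .
    moreover have "c * m ^ n = p2 ^ n * (2 * \<eta>) ^ n"
    proof -
      have eq: "p2 / (8 * N) * m = p2 * (2 * \<eta>)" using N0 by (simp add: \<eta>_def \<delta>_def field_simps)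
      have "c * m ^ n = (p2 / (8 * N) * m) ^ n" unfolding c_def by (rule power_mult_distrib[symmetric])
      also have "\<dots> = (p2 * (2 * \<eta>)) ^ n" by (simp only: eq)
      also have "\<dots> = p2 ^ n * (2 * \<eta>) ^ n" by (rule power_mult_distrib)
      finally show ?thesis .
    qed
    ultimately have "c * m ^ n \<le> measure gauss_mat E" by simp
    then show ?thesis unfolding E_def m_def .
  qed
  show ?thesis
  proof (intro exI[of _ c] conjI c0 ballI allI impI)
    fix U :: "real^'r^'d" and \<epsilon> :: real
    assume "U \<in> stiefel" "0 < \<epsilon>"
    then show "c * min \<epsilon> (1/2) ^ (CARD('d) * CARD('r))
      \<le> measure gauss_mat {Z \<in> space gauss_mat. onorm (\<lambda>x. (stiefel_map Z - U) *v x) \<le> \<epsilon>}"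
      using main unfolding n_def by blast
  qed
qed



end
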